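(* Let $\mathcal{V}_t$ be a variety of $\Omega$-algebras satisfying $t(x,y)=x$ for some $t\in T_2$, let $X$ be a set, let $B=X\mathcal{V}_t^{\,p}$ be the free $\mathcal{V}_t^{\,p}$-algebra over $X$, and let $\delta$ be any congruence of $B$. Then $B/\delta$ is a semilattice sum of $\mathcal{V}_t$-algebras, i.e. $B/\delta\in\mathcal{V}_t\circ\mathcal{S}$. Moreover, if $\varrho_B$ is the semilattice replica congruence of $B$ and $\psi=\delta\vee\varrho_B$, then $\psi/\delta$ is the semilattice replica congruence of $B/\delta$, and each $\psi/\delta$-class lies in $\mathcal{V}_t$.
   Context: Standing conventions: $\Omega$-algebras are of a plural similarity type (no nullary operation symbols, at least one operation symbol of arity $\ge2$). $T_n$ is the set of $\Omega$-terms in $x_1,\dots,x_n$ in which all $n$ variables occur. An identity is regular if the same variables occur on both sides. $\mathcal{S}$ is the variety of $\Omega$-algebras satisfying all regular identities ($\Omega$-semilattices). $\mathcal{V}\circ\mathcal{S}$ is the class of $\Omega$-algebras $A$ having a congruence $\theta$ with $A/\theta\in\mathcal{S}$ and every $\theta$-class (a subalgebra) in $\mathcal{V}$ (a semilattice sum of $\mathcal{V}$-algebras). The semilattice replica congruence of an algebra $A$ is the smallest congruence $\varrho$ of $A$ with $A/\varrho\in\mathcal{S}$. Prolongation: for an identity $\sigma$ of the form $u(y_1,\dots,y_n)=v(y_1,\dots,y_n)$ and $m\ge1$, $\sigma^p_m$ is the set of identities $u(r_1,\dots,r_n)=v(r_1,\dots,r_n)$ obtained by substituting $r_i(x_1,\dots,x_m)$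 for $y_i$, with $r_i$ ranging over $T_m$; $\sigma^p=\bigcup_m\sigma^p_m$; $\Sigma^p=\bigcup_{\sigma\in\Sigma}\sigma^p$. For a variety $\mathcal{V}$, $\mathcal{V}^p$ is the variety defined by $\mathrm{Id}(\mathcal{V})^p$, $\mathrm{Id}(\mathcal{V})$ being all identities true in $\mathcal{V}$. *)

theory Defs
  imports Main
begin

text \<open>Omega-terms over variables of type 'v; the signature is the type 'f of
  operation symbols together with an arity function ar.\<close>

datatype ('f,'v) trm = Var 'v | Fun 'f "('f,'v) trm list"

type_synonym ('a,'f) alg = "'a set \<times> ('f \<Rightarrow> 'a list \<Rightarrow> 'a)"

type_synonym ('f,'v) ident = "('f,'v) trm \<times> ('f,'v) trm"

fun vars :: "('f,'v) trm \<Rightarrow> 'v set" where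
  "vars (Var v) = {v}"
| "vars (Fun f ts) = (\<Union>t\<in>set ts. vars t)"

fun wf_trm :: "('f \<Rightarrow> nat) \<Rightarrow> ('f,'v) trm \<Rightarrow> bool" where
  "wf_trm ar (Var v) = True"
| "wf_trm ar (Fun f ts) = (length ts = ar f \<and> (\<forall>t\<in>set ts. wf_trm ar t))"

fun eval :: "('a,'f) alg \<Rightarrow> ('v \<Rightarrow> 'a) \<Rightarrow> ('f,'v) trm \<Rightarrow> 'a" where
  "eval A h (Var v) = h v"
| "eval A h (Fun f ts) = snd A f (map (eval A h) ts)"

fun subst :: "('v \<Rightarrow> ('f,'w) trm) \<Rightarrow> ('f,'v) trm \<Rightarrow> ('f,'w) trm" where
  "subst s (Var v) = s v"
| "subst s (Fun f ts) = Fun f (map (subst s) ts)"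

definition plural :: "('f \<Rightarrow> nat) \<Rightarrow> bool" where
  "plural ar \<longleftrightarrow> (\<forall>f. ar f \<ge> 1) \<and> (\<exists>f. ar f \<ge> 2)"

definition is_alg :: "('f \<Rightarrow> nat) \<Rightarrow> ('a,'f) alg \<Rightarrow> bool" where
  "is_alg ar A \<longleftrightarrow> (\<forall>f as. length as = ar f \<and> set as \<subseteq> fst A \<longrightarrow> snd A f as \<in> fst A)"

definition satisfies :: "('a,'f) alg \<Rightarrow> ('f,'v) ident \<Rightarrow> bool" where
  "satisfies A \<sigma> \<longleftrightarrow> (\<forall>h. (\<forall>x. h x \<in> fst A) \<longrightarrow> eval A h (fst \<sigma>) = eval A h (snd \<sigma>))"

definition in_Mod :: "('f \<Rightarrow> nat) \<Rightarrow> ('f,'v) ident set \<Rightarrow> ('a,'f) alg \<Rightarrow> bool" where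
  "in_Mod ar \<Sigma> A \<longleftrightarrow> is_alg ar A \<and> (\<forall>\<sigma>\<in>\<Sigma>. satisfies A \<sigma>)"

text \<open>Testing on algebras whose elements are sets of terms over nat suffices, since the
  free V-algebra over countably many generators is of this form.\<close>
definition IdV :: "('f \<Rightarrow> nat) \<Rightarrow> ('f,nat) ident set \<Rightarrow> ('f,nat) ident set" where
  "IdV ar E = {(u,v). wf_trm ar u \<and> wf_trm ar v \<and>
     (\<forall>A :: (('f,nat) trm set, 'f) alg. in_Mod ar E A \<longrightarrow> satisfies A (u,v))}"

definition Tm :: "('f \<Rightarrow> nat) \<Rightarrow> nat \<Rightarrow> ('f,nat) trm set" where
  "Tm ar m = {t. wf_trm ar t \<and> vars t = {..<m}}"

definition prolong :: "('f \<Rightarrow> nat) \<Rightarrow> ('f,nat) ident set \<Rightarrow> ('f,nat) ident set" where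
  "prolong ar \<Sigma> = {(subst s u, subst s v) | u v s m. (u,v) \<in> \<Sigma> \<and> m \<ge> 1 \<and>
      (\<forall>y\<in>vars u \<union> vars v. s y \<in> Tm ar m)}"

definition termalg :: "('f \<Rightarrow> nat) \<Rightarrow> 'x set \<Rightarrow> (('f,'x) trm, 'f) alg" where
  "termalg ar X = ({t. wf_trm ar t \<and> vars t \<subseteq> X}, Fun)"

definition quot :: "('a,'f) alg \<Rightarrow> ('a \<times> 'a) set \<Rightarrow> ('a set,'f) alg" where
  "quot A \<theta> = (fst A // \<theta>, \<lambda>f cs. \<theta> `` {snd A f (map (\<lambda>c. SOME a. a \<in> c) cs)})"

definition is_cong :: "('f \<Rightarrow> nat) \<Rightarrow> ('a,'f) alg \<Rightarrow> ('a \<times> 'a) set \<Rightarrow> bool" where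
  "is_cong ar A \<theta> \<longleftrightarrow> equiv (fst A) \<theta> \<and>
     (\<forall>f as bs. length as = ar f \<longrightarrow> list_all2 (\<lambda>a b. (a,b) \<in> \<theta>) as bs \<longrightarrow>
        (snd A f as, snd A f bs) \<in> \<theta>)"

text \<open>Kernel of the canonical map from terms over X onto the free Mod(Sigma)-algebra.\<close>
definition freecong :: "('f \<Rightarrow> nat) \<Rightarrow> ('f,nat) ident set \<Rightarrow> 'x set \<Rightarrow> (('f,'x) trm \<times> ('f,'x) trm) set" where
  "freecong ar \<Sigma> X = {(u,v). u \<in> fst (termalg ar X) \<and> v \<in> fst (termalg ar X) \<and>
     (\<forall>A :: (('f,'x) trm set, 'f) alg. in_Mod ar \<Sigma> A \<longrightarrow>
        (\<forall>h. h ` X \<subseteq> fst A \<longrightarrow> eval A h u = eval A h v))}"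

definition free_alg :: "('f \<Rightarrow> nat) \<Rightarrow> ('f,nat) ident set \<Rightarrow> 'x set \<Rightarrow> (('f,'x) trm set, 'f) alg" where
  "free_alg ar \<Sigma> X = quot (termalg ar X) (freecong ar \<Sigma> X)"

definition regular_ids :: "('f \<Rightarrow> nat) \<Rightarrow> ('f,nat) ident set" where
  "regular_ids ar = {(u,v). wf_trm ar u \<and> wf_trm ar v \<and> vars u = vars v}"

definition in_S :: "('f \<Rightarrow> nat) \<Rightarrow> ('a,'f) alg \<Rightarrow> bool" where
  "in_S ar A \<longleftrightarrow> in_Mod ar (regular_ids ar) A"

definition sl_replica :: "('f \<Rightarrow> nat) \<Rightarrow> ('a,'f) alg \<Rightarrow> ('a \<times> 'a) set \<Rightarrow> bool" where
  "sl_replica ar A \<rho> \<longleftrightarrow> is_cong ar A \<rho> \<and> in_S ar (quot A \<rho>) \<and>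
     (\<forall>\<theta>. is_cong ar A \<theta> \<and> in_S ar (quot A \<theta>) \<longrightarrow> \<rho> \<subseteq> \<theta>)"

definition cong_join :: "('f \<Rightarrow> nat) \<Rightarrow> ('a,'f) alg \<Rightarrow> ('a \<times> 'a) set \<Rightarrow> ('a \<times> 'a) set \<Rightarrow> ('a \<times> 'a) set" where
  "cong_join ar A \<theta>1 \<theta>2 = \<Inter>{\<theta>. is_cong ar A \<theta> \<and> \<theta>1 \<union> \<theta>2 \<subseteq> \<theta>}"

text \<open>psi/delta for delta contained in psi.\<close>
definition cong_quot :: "('a \<times> 'a) set \<Rightarrow> ('a \<times> 'a) set \<Rightarrow> ('a set \<times> 'a set) set" where
  "cong_quot \<psi> \<delta> = {(\<delta> `` {a}, \<delta> `` {b}) | a b. (a,b) \<in> \<psi>}"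

definition subalg :: "('a,'f) alg \<Rightarrow> 'a set \<Rightarrow> ('a,'f) alg" where
  "subalg A c = (c, snd A)"

definition in_VS :: "('f \<Rightarrow> nat) \<Rightarrow> ('f,nat) ident set \<Rightarrow> ('a,'f) alg \<Rightarrow> bool" where
  "in_VS ar E A \<longleftrightarrow> (\<exists>\<theta>. is_cong ar A \<theta> \<and> in_S ar (quot A \<theta>) \<and>
     (\<forall>c\<in>fst A // \<theta>. in_Mod ar E (subalg A c)))"

end

theory Submission
  imports Defs
begin

lemma eval_subst: "eval A h (subst s u) = eval A (\<lambda>y. eval A h (s y)) u"
  by (induction u) (auto intro!: map_cong arg_cong[where f="snd A _"])

lemma vars_subst: "vars (subst s u) = (\<Union>y\<in>vars u. vars (s y))"
  by (induction u) auto

lemma wf_subst: "wf_trm ar u \<Longrightarrow> (\<forall>y\<in>vars u. wf_trm ar (s y)) \<Longrightarrow> wf_trm ar (subst s u)"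
  by (induction u) auto

lemma eval_cong: "(\<forall>y\<in>vars u. h y = h' y) \<Longrightarrow> eval A h u = eval A h' u"
  by (induction u) (auto intro!: map_cong arg_cong[where f="snd A _"])

lemma eval_snd: "snd A = snd A' \<Longrightarrow> eval A h u = eval A' h u"
  by (induction u) (auto intro!: map_cong arg_cong[where f="snd A' _"])

lemma is_algD: "is_alg ar A \<Longrightarrow> length as = ar f \<Longrightarrow> set as \<subseteq> fst A \<Longrightarrow> snd A f as \<in> fst A"
  unfolding is_alg_def by blast

lemma eval_in: "is_alg ar A \<Longrightarrow> wf_trm ar u \<Longrightarrow> (\<forall>y\<in>vars u. h y \<in> fst A) \<Longrightarrow> eval A h u \<in> fst A"
proof (induction u)
  case (Var x) then show ?case by simp
next
  case (Fun f ts)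
  have "snd A f (map (eval A h) ts) \<in> fst A"
    by (rule is_algD[OF Fun.prems(1)]) (use Fun in auto)
  then show ?case by simp
qed

lemma vars_finite: "finite (vars u)"
  by (induction u) auto

lemma vars_nonempty: "\<forall>f. ar f \<ge> 1 \<Longrightarrow> wf_trm ar u \<Longrightarrow> vars u \<noteq> {}"
proof (induction u)
  case (Var x) then show ?case by simp
next
  case (Fun f ts)
  then have "ts \<noteq> []" by (metis list.size(3) not_one_le_zero wf_trm.simps(2))
  then obtain x where "x \<in> set ts" by fastforce
  then show ?case using Fun by auto
qed

lemma eval_termalg: "eval (termalg ar X) g u = subst g u"
  by (induction u) (auto simp: termalg_def)


lemma quot_hom:
  assumes "is_cong ar A \<theta>" "length as = ar f" "set as \<subseteq> fst A"
  shows "snd (quot A \<theta>) f (map (\<lambda>a. \<theta> `` {a}) as) = \<theta> `` {snd A f as}"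
proof -
  have eq: "equiv (fst A) \<theta>" using assms(1) unfolding is_cong_def by blast
  have rel: "(SOME x. x \<in> \<theta> `` {a}, a) \<in> \<theta>" if "a \<in> fst A" for a
  proof -
    have "a \<in> \<theta> `` {a}" using eq that by (rule equiv_class_self)
    then have "(SOME x. x \<in> \<theta> `` {a}) \<in> \<theta> `` {a}" by (rule someI)
    then show ?thesis using eq by (meson Image_singleton_iff equivE symD)
  qed
  have la: "list_all2 (\<lambda>a b. (a,b) \<in> \<theta>) (map (\<lambda>a. SOME x. x \<in> \<theta> `` {a}) as) as"
    using assms(3) rel by (auto simp: list_all2_conv_all_nth simp del: Image_singleton_iff intro!: rel)
  have "(snd A f (map (\<lambda>a. SOME x. x \<in> \<theta> `` {a}) as), snd A f as) \<in> \<theta>"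
    using assms(1) la assms(2) unfolding is_cong_def by simp
  then have "\<theta> `` {snd A f (map (\<lambda>a. SOME x. x \<in> \<theta> `` {a}) as)} = \<theta> `` {snd A f as}"
    by (rule equiv_class_eq[OF eq])
  then show ?thesis by (simp add: quot_def comp_def)
qed

lemma eval_quot:
  assumes "is_cong ar A \<theta>" "is_alg ar A" "wf_trm ar u" "\<forall>y. h y \<in> fst A"
  shows "eval (quot A \<theta>) (\<lambda>y. \<theta> `` {h y}) u = \<theta> `` {eval A h u}"
  using assms(3)
proof (induction u)
  case (Var x) then show ?case by simp
next
  case (Fun f ts)
  have "map (eval (quot A \<theta>) (\<lambda>y. \<theta> `` {h y})) ts = map (\<lambda>a. \<theta> `` {a}) (map (eval A h) ts)"
    using Fun by auto
  moreover have "snd (quot A \<theta>) f (map (\<lambda>a. \<theta> `` {a}) (map (eval A h) ts)) = \<theta> `` {snd A f (map (eval A h) ts)}"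
    by (rule quot_hom[OF assms(1)]) (use Fun assms in \<open>auto intro!: eval_in\<close>)
  ultimately show ?case by (simp del: map_map)
qed

lemma quot_rep:
  assumes "equiv C \<theta>" "c \<in> C // \<theta>"
  shows "(SOME x. x \<in> c) \<in> C \<and> \<theta> `` {SOME x. x \<in> c} = c"
proof -
  obtain a where a: "a \<in> C" "c = \<theta> `` {a}" using assms(2) by (rule quotientE)
  have "a \<in> c" using a equiv_class_self[OF assms(1) a(1)] by simp
  then have s: "(SOME x. x \<in> c) \<in> c" by (rule someI)
  then have r: "(a, SOME x. x \<in> c) \<in> \<theta>" using a by simp
  then have "(SOME x. x \<in> c) \<in> C" using equiv_type[OF assms(1)] by blast
  moreover have "\<theta> `` {a} = \<theta> `` {SOME x. x \<in> c}" using equiv_class_eq[OF assms(1) r] .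
  then have "c = \<theta> `` {SOME x. x \<in> c}" by (rule trans[OF a(2)])
  then have "\<theta> `` {SOME x. x \<in> c} = c" by (rule sym)
  ultimately show ?thesis by (rule conjI)
qed

lemma quot_is_alg:
  assumes "is_alg ar A" "equiv (fst A) \<theta>"
  shows "is_alg ar (quot A \<theta>)"
  unfolding is_alg_def
proof (intro allI impI)
  fix f cs assume h: "length cs = ar f \<and> set cs \<subseteq> fst (quot A \<theta>)"
  have "snd A f (map (\<lambda>c. SOME a. a \<in> c) cs) \<in> fst A"
    by (rule is_algD[OF assms(1)]) (use h quot_rep[OF assms(2)] in \<open>auto simp: quot_def\<close>)
  then show "snd (quot A \<theta>) f cs \<in> fst (quot A \<theta>)"
    by (simp add: quot_def quotientI)
qed

lemma quot_fun:
  assumes "equiv (fst A) \<theta>" "\<forall>x. h x \<in> fst (quot A \<theta>)"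
  shows "h = (\<lambda>y. \<theta> `` {SOME a. a \<in> h y})" "\<forall>y. (SOME a. a \<in> h y) \<in> fst A"
proof -
  have "\<And>y. h y \<in> fst A // \<theta>" using assms(2) by (simp add: quot_def)
  then have "\<And>y. (SOME a. a \<in> h y) \<in> fst A \<and> \<theta> `` {SOME a. a \<in> h y} = h y"
    using quot_rep[OF assms(1)] by blast
  then show "h = (\<lambda>y. \<theta> `` {SOME a. a \<in> h y})" "\<forall>y. (SOME a. a \<in> h y) \<in> fst A"
    by auto
qed

lemma quot_sat:
  fixes A :: "('a,'f) alg" and u v :: "('f,'v) trm"
  assumes "is_alg ar A" "is_cong ar A \<theta>" "wf_trm ar u" "wf_trm ar v" "satisfies A (u,v)"
  shows "satisfies (quot A \<theta>) (u,v)"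
  unfolding satisfies_def
proof (intro allI impI)
  fix h :: "'v \<Rightarrow> 'a set" assume h: "\<forall>x. h x \<in> fst (quot A \<theta>)"
  have eq: "equiv (fst A) \<theta>" using assms(2) unfolding is_cong_def by blast
  define g where "g = (\<lambda>y. SOME a. a \<in> h y)"
  have hg: "h = (\<lambda>y. \<theta> `` {g y})" unfolding g_def by (rule quot_fun(1)[OF eq h])
  have g: "\<forall>y. g y \<in> fst A" unfolding g_def by (rule quot_fun(2)[OF eq h])
  have "eval A g u = eval A g v" using assms(5) g unfolding satisfies_def by auto
  then show "eval (quot A \<theta>) h (fst (u, v)) = eval (quot A \<theta>) h (snd (u, v))"
    unfolding hg using eval_quot[OF assms(2,1) _ g] assms(3,4) by simp
qed


lemma termalg_alg: "is_alg ar (termalg ar X)"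
  unfolding is_alg_def termalg_def by auto

lemma freecong_cong: "is_cong ar (termalg ar X) (freecong ar \<Sigma> X)"
  unfolding is_cong_def
proof (intro conjI allI impI)
  show "equiv (fst (termalg ar X)) (freecong ar \<Sigma> X)"
    by (rule equivI) (auto simp: freecong_def refl_on_def sym_def trans_def)
next
  fix f as bs assume l: "length as = ar f" and la: "list_all2 (\<lambda>a b. (a, b) \<in> freecong ar \<Sigma> X) as bs"
  have inA: "\<forall>a\<in>set as. a \<in> fst (termalg ar X)" and inB: "\<forall>b\<in>set bs. b \<in> fst (termalg ar X)"
    using la by (auto simp: list_all2_conv_all_nth set_conv_nth freecong_def)
  have lb: "length bs = ar f" using la l by (simp add: list_all2_lengthD)
  show "(snd (termalg ar X) f as, snd (termalg ar X) f bs) \<in> freecong ar \<Sigma> X"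
  proof -
    have 1: "snd (termalg ar X) f as \<in> fst (termalg ar X)" using inA l by (auto simp: termalg_def)
    have 2: "snd (termalg ar X) f bs \<in> fst (termalg ar X)" using inB lb by (auto simp: termalg_def)
    have 3: "eval A h (snd (termalg ar X) f as) = eval A h (snd (termalg ar X) f bs)"
      if "in_Mod ar \<Sigma> A" "h ` X \<subseteq> fst A" for A :: "(('a, 'b) trm set, 'a) alg" and h
    proof -
    have "\<forall>i<length as. eval A h (as ! i) = eval A h (bs ! i)"
    proof (intro allI impI)
      fix i assume "i < length as"
      then have "(as!i, bs!i) \<in> freecong ar \<Sigma> X" using la by (simp add: list_all2_conv_all_nth)
      then show "eval A h (as ! i) = eval A h (bs ! i)" using that unfolding freecong_def by blast
    qed
    then have "map (eval A h) as = map (eval A h) bs"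
      using la by (auto simp: list_all2_conv_all_nth intro!: nth_equalityI)
    then show ?thesis
      by (simp add: termalg_def)
    qed
    show ?thesis unfolding freecong_def mem_Collect_eq case_prod_conv using 1 2 3 by blast
  qed
qed

lemma free_alg_alg: "is_alg ar (free_alg ar \<Sigma> X)"
  unfolding free_alg_def
  by (rule quot_is_alg[OF termalg_alg]) (use freecong_cong in \<open>auto simp: is_cong_def\<close>)

lemma free_sat:
  fixes \<Sigma> :: "('f,nat) ident set" and X :: "'x set"
  assumes "\<forall>\<sigma>\<in>\<Sigma>. wf_trm ar (fst \<sigma>) \<and> wf_trm ar (snd \<sigma>)" "(u,v) \<in> \<Sigma>"
  shows "satisfies (free_alg ar \<Sigma> X) (u,v)"
  unfolding satisfies_def free_alg_def
proof (intro allI impI)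
  let ?T = "termalg ar X" and ?F = "freecong ar \<Sigma> X"
  fix h :: "nat \<Rightarrow> ('f,'x) trm set" assume h: "\<forall>x. h x \<in> fst (quot ?T ?F)"
  have eq: "equiv (fst ?T) ?F" using freecong_cong unfolding is_cong_def by blast
  define g where "g = (\<lambda>y. SOME a. a \<in> h y)"
  have hg: "h = (\<lambda>y. ?F `` {g y})" unfolding g_def by (rule quot_fun(1)[OF eq h])
  have g: "\<forall>y. g y \<in> fst ?T" unfolding g_def by (rule quot_fun(2)[OF eq h])
  have wf: "wf_trm ar u" "wf_trm ar v" using assms by auto
  have "(subst g u, subst g v) \<in> ?F"
  proof -
    have 1: "subst g u \<in> fst ?T" "subst g v \<in> fst ?T"
      using g wf by (auto simp: termalg_def vars_subst intro!: wf_subst)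
    have 2: "eval A h' (subst g u) = eval A h' (subst g v)"
      if A: "in_Mod ar \<Sigma> A" "h' ` X \<subseteq> fst A" for A :: "(('f, 'x) trm set, 'f) alg" and h'
    proof -
    have "\<forall>y. eval A h' (g y) \<in> fst A"
      using g A by (auto simp: termalg_def in_Mod_def intro!: eval_in)
    then have "eval A (\<lambda>y. eval A h' (g y)) u = eval A (\<lambda>y. eval A h' (g y)) v"
      using A assms(2) unfolding in_Mod_def satisfies_def by fastforce
    then show ?thesis by (simp add: eval_subst)
    qed
    show ?thesis unfolding freecong_def mem_Collect_eq case_prod_conv using 1 2 by blast
  qed
  then have "?F `` {eval ?T g u} = ?F `` {eval ?T g v}"
    by (simp add: eval_termalg equiv_class_eq[OF eq])
  then show "eval (quot ?T ?F) h (fst (u, v)) = eval (quot ?T ?F) h (snd (u, v))"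
    unfolding hg using eval_quot[OF freecong_cong termalg_alg _ g] wf by simp
qed


lemma Tm_wf: "r \<in> Tm ar m \<Longrightarrow> wf_trm ar r" by (simp add: Tm_def)

locale pro =
  fixes ar :: "'f \<Rightarrow> nat" and E :: "('f,nat) ident set" and t :: "('f,nat) trm"
    and A :: "('a,'f) alg"
  assumes plural: "plural ar"
    and Ewf: "\<forall>(u,v)\<in>E. wf_trm ar u \<and> wf_trm ar v"
    and tT: "t \<in> Tm ar 2"
    and tid: "(t, Var 0) \<in> IdV ar E"
    and alg: "is_alg ar A"
    and sat: "\<forall>\<sigma>\<in>prolong ar (IdV ar E). satisfies A \<sigma>"
begin

definition tA :: "'a \<Rightarrow> 'a \<Rightarrow> 'a" where
  "tA a b = eval A (\<lambda>y. if y = 0 then a else b) t"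

definition R :: "('a \<times> 'a) set" where
  "R = {(a,b). a \<in> fst A \<and> b \<in> fst A \<and> tA a b = a \<and> tA b a = b}"

definition tsub :: "('f,nat) trm \<Rightarrow> ('f,nat) trm \<Rightarrow> ('f,nat) trm" where
  "tsub a b = subst (\<lambda>y. if y = 0 then a else b) t"

lemma ar1: "ar f \<ge> 1" using plural by (simp add: plural_def)

lemma t_wf: "wf_trm ar t" using tT by (simp add: Tm_def)
lemma t_vars: "vars t = {0,1}"
proof -
  have "vars t = {..<2}" using tT by (simp add: Tm_def)
  moreover have "{..<2::nat} = {0,1}" by (simp add: lessThan_Suc numeral_2_eq_2 insert_commute)
  ultimately show ?thesis by simp
qed

lemma tsub_vars: "vars (tsub a b) = vars a \<union> vars b"
  by (simp add: tsub_def vars_subst t_vars)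

lemma tsub_wf: "wf_trm ar a \<Longrightarrow> wf_trm ar b \<Longrightarrow> wf_trm ar (tsub a b)"
  unfolding tsub_def by (rule wf_subst[OF t_wf]) auto

lemma tsub_eval: "eval A h (tsub a b) = tA (eval A h a) (eval A h b)"
  unfolding tsub_def tA_def eval_subst by (rule eval_cong) auto

lemma tA_in: "a \<in> fst A \<Longrightarrow> b \<in> fst A \<Longrightarrow> tA a b \<in> fst A"
  unfolding tA_def by (rule eval_in[OF alg t_wf]) auto

lemma identity_gen:
  assumes uv: "(u,v) \<in> IdV ar E" and W: "W \<noteq> {}" "finite W"
    and s: "\<forall>y\<in>vars u \<union> vars v. wf_trm ar (s y) \<and> vars (s y) = W"
    and h: "\<forall>x. h x \<in> fst A"
  shows "eval A h (subst s u) = eval A h (subst s v)"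
proof -
  define m where "m = card W"
  have m1: "m \<ge> 1" using W by (simp add: m_def Suc_le_eq card_gt_0_iff)
  obtain \<pi> where pi: "bij_betw \<pi> {0..<m} W" using ex_bij_betw_nat_finite[OF W(2)] m_def by blast
  define \<pi>' where "\<pi>' = inv_into {0..<m} \<pi>"
  have pi': "bij_betw \<pi>' W {0..<m}" unfolding \<pi>'_def by (rule bij_betw_inv_into[OF pi])
  have pipi: "\<pi> (\<pi>' z) = z" if "z \<in> W" for z
    unfolding \<pi>'_def using pi that by (simp add: bij_betw_inv_into_right)
  define s' where "s' y = subst (\<lambda>z. Var (\<pi>' z)) (s y)" for y
  have s'T: "s' y \<in> Tm ar m" if "y \<in> vars u \<union> vars v" for y
  proof -
    have "wf_trm ar (s' y)" unfolding s'_def using s that by (auto intro!: wf_subst)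
    moreover have "vars (s' y) = \<pi>' ` W" unfolding s'_def using s that by (auto simp: vars_subst)
    moreover have "\<pi>' ` W = {..<m}" using pi' by (auto simp: bij_betw_def)
    ultimately show ?thesis by (simp add: Tm_def)
  qed
  have "(subst s' u, subst s' v) \<in> prolong ar (IdV ar E)"
    unfolding prolong_def using uv m1 s'T by blast
  then have "satisfies A (subst s' u, subst s' v)" using sat by blast
  moreover have "\<forall>x. (h \<circ> \<pi>) x \<in> fst A" using h by simp
  ultimately have e: "eval A (h \<circ> \<pi>) (subst s' u) = eval A (h \<circ> \<pi>) (subst s' v)"
    unfolding satisfies_def by auto
  have key: "eval A (h \<circ> \<pi>) (subst s' w) = eval A h (subst s w)" if "vars w \<subseteq> vars u \<union> vars v" for w
  proof -
    have "eval A (h \<circ> \<pi>) (s' y) = eval A h (s y)" if "y \<in> vars w" for y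
    proof -
      have "eval A (h \<circ> \<pi>) (s' y) = eval A (\<lambda>z. h (\<pi> (\<pi>' z))) (s y)"
        unfolding s'_def eval_subst by simp
      also have "\<dots> = eval A h (s y)"
        by (rule eval_cong) (use s that \<open>vars w \<subseteq> _\<close> pipi in auto)
      finally show ?thesis .
    qed
    then show ?thesis unfolding eval_subst by (intro eval_cong) auto
  qed
  show ?thesis using e key[of u] key[of v] by simp
qed

lemma E_IdV: "(u,v) \<in> E \<Longrightarrow> (u,v) \<in> IdV ar E"
  using Ewf unfolding IdV_def in_Mod_def by auto

lemma absorb:
  fixes r1 r2 :: "('f,nat) trm" and h :: "nat \<Rightarrow> 'a"
  assumes "wf_trm ar r1" "wf_trm ar r2" "vars r1 = vars r2" "\<forall>x. h x \<in> fst A"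
  shows "tA (eval A h r1) (eval A h r2) = eval A h r1"
proof -
  define s where "s = (\<lambda>y::nat. if y = 0 then r1 else r2)"
  have "eval A h (subst s t) = eval A h (subst s (Var 0))"
  proof (rule identity_gen[OF tid])
    show "vars r1 \<noteq> {}" using vars_nonempty ar1 assms(1) by blast
    show "finite (vars r1)" by (rule vars_finite)
    show "\<forall>y\<in>vars t \<union> vars (Var 0). wf_trm ar (s y) \<and> vars (s y) = vars r1"
      using assms by (auto simp: s_def t_vars)
  qed (use assms in auto)
  moreover have "subst s t = tsub r1 r2" by (simp add: s_def tsub_def)
  ultimately show ?thesis by (simp add: tsub_eval s_def)
qed

lemma tA_refl: "a \<in> fst A \<Longrightarrow> tA a a = a"
  using absorb[of "Var 0" "Var 0" "\<lambda>_. a"] by simp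

lemma tA_trans:
  assumes "a \<in> fst A" "b \<in> fst A" "c \<in> fst A"
    "tA a b = a" "tA b c = b" "tA b a = b" "tA c b = c"
  shows "tA a c = a"
proof -
  define h where "h y = (if y = 0 then a else if y = 1 then b else c)" for y :: nat
  define r1 where "r1 = tsub (Var 0) (tsub (Var 1) (Var 2))"
  define r2 where "r2 = tsub (Var 2) (tsub (Var 1) (Var 0))"
  have "tA (eval A h r1) (eval A h r2) = eval A h r1"
    by (rule absorb) (auto simp: r1_def r2_def tsub_wf tsub_vars h_def assms)
  moreover have "eval A h r1 = a" by (simp add: r1_def tsub_eval h_def assms)
  moreover have "eval A h r2 = c" by (simp add: r2_def tsub_eval h_def assms)
  ultimately show ?thesis by simp
qed

lemma tA_compat:
  assumes l: "length as = ar f" and la: "list_all2 (\<lambda>a b. (a,b) \<in> R) as bs"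
  shows "tA (snd A f as) (snd A f bs) = snd A f as"
proof -
  define k where "k = length as"
  have k1: "k \<ge> 1" using ar1 l k_def by simp
  have lb: "length bs = k" using la k_def by (simp add: list_all2_lengthD)
  have inAs: "as!i \<in> fst A \<and> bs!i \<in> fst A \<and> tA (as!i) (bs!i) = as!i \<and> tA (bs!i) (as!i) = bs!i"
    if "i < k" for i
    using la that k_def by (auto simp: list_all2_conv_all_nth R_def)
  define h where "h y = (if y < k then as!y else if y < 2*k then bs!(y-k) else as!0)" for y
  have h: "\<forall>x. h x \<in> fst A" using inAs k1 by (auto simp: h_def)
  define r1 where "r1 = Fun f (map (\<lambda>i. tsub (Var i) (Var (k+i))) [0..<k])"
  define r2 where "r2 = Fun f (map (\<lambda>i. tsub (Var (k+i)) (Var i)) [0..<k])"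
  have "tA (eval A h r1) (eval A h r2) = eval A h r1"
  proof (rule absorb[OF _ _ _ h])
    show "wf_trm ar r1" "wf_trm ar r2" using l k_def by (auto simp: r1_def r2_def tsub_wf)
    show "vars r1 = vars r2" by (auto simp: r1_def r2_def tsub_vars)
  qed
  moreover have "map (eval A h) (map (\<lambda>i. tsub (Var i) (Var (k+i))) [0..<k]) = as"
    by (rule nth_equalityI) (auto simp: tsub_eval h_def inAs k_def)
  moreover have "map (eval A h) (map (\<lambda>i. tsub (Var (k+i)) (Var i)) [0..<k]) = bs"
    by (rule nth_equalityI) (auto simp: tsub_eval h_def inAs lb)
  ultimately show ?thesis by (simp add: r1_def r2_def del: map_map)
qed

lemma R_cong: "is_cong ar A R"
  unfolding is_cong_def
proof (intro conjI allI impI)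
  show "equiv (fst A) R"
  proof (rule equivI)
    show "R \<subseteq> fst A \<times> fst A" by (auto simp: R_def)
    show "refl_on (fst A) R" by (auto simp: refl_on_def R_def tA_refl)
    show "sym R" by (auto simp: sym_def R_def)
    show "trans R" unfolding trans_def R_def
      using tA_trans by (smt (verit, best) case_prodD case_prodI mem_Collect_eq)
  qed
next
  fix f as bs assume l: "length as = ar f" and la: "list_all2 (\<lambda>a b. (a, b) \<in> R) as bs"
  have lb: "length bs = ar f" using la l by (simp add: list_all2_lengthD)
  have la': "list_all2 (\<lambda>a b. (a, b) \<in> R) bs as"
    using la by (auto simp: list_all2_conv_all_nth R_def)
  have "set as \<subseteq> fst A" "set bs \<subseteq> fst A"
    using la by (auto simp: list_all2_conv_all_nth set_conv_nth R_def)
  then show "(snd A f as, snd A f bs) \<in> R"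
    using tA_compat[OF l la] tA_compat[OF lb la'] is_algD[OF alg] l lb by (auto simp: R_def)
qed

lemma R_S: "in_S ar (quot A R)"
  unfolding in_S_def in_Mod_def
proof (intro conjI ballI)
  have eq: "equiv (fst A) R" using R_cong unfolding is_cong_def by blast
  show "is_alg ar (quot A R)" by (rule quot_is_alg[OF alg eq])
  fix \<sigma> assume "\<sigma> \<in> regular_ids ar"
  then obtain u v where \<sigma>: "\<sigma> = (u,v)" "wf_trm ar u" "wf_trm ar v" "vars u = vars v"
    by (auto simp: regular_ids_def)
  show "satisfies (quot A R) \<sigma>"
    unfolding satisfies_def \<sigma>(1)
  proof (intro allI impI)
    fix h :: "nat \<Rightarrow> 'a set" assume h: "\<forall>x. h x \<in> fst (quot A R)"
    define g where "g = (\<lambda>y. SOME a. a \<in> h y)"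
    have hg: "h = (\<lambda>y. R `` {g y})" unfolding g_def by (rule quot_fun(1)[OF eq h])
    have g: "\<forall>y. g y \<in> fst A" unfolding g_def by (rule quot_fun(2)[OF eq h])
    have "(eval A g u, eval A g v) \<in> R"
      unfolding R_def using absorb[OF \<sigma>(2,3,4) g] absorb[OF \<sigma>(3,2) \<sigma>(4)[symmetric] g]
        eval_in[OF alg \<sigma>(2)] eval_in[OF alg \<sigma>(3)] g by auto
    then have "R `` {eval A g u} = R `` {eval A g v}" by (rule equiv_class_eq[OF eq])
    then show "eval (quot A R) h (fst (u, v)) = eval (quot A R) h (snd (u, v))"
      unfolding hg using eval_quot[OF R_cong alg _ g] \<sigma> by simp
  qed
qed

lemma R_min:
  assumes "is_cong ar A \<theta>" "in_S ar (quot A \<theta>)"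
  shows "R \<subseteq> \<theta>"
proof
  fix p assume "p \<in> R"
  then obtain a b where p: "p = (a,b)" "a \<in> fst A" "b \<in> fst A" "tA a b = a" "tA b a = b"
    by (auto simp: R_def)
  have eq: "equiv (fst A) \<theta>" using assms(1) unfolding is_cong_def by blast
  define t' :: "('f,nat) trm" where "t' = subst (\<lambda>y. if y = 0 then Var 1 else Var 0) t"
  have "(t, t') \<in> regular_ids ar"
    unfolding regular_ids_def t'_def using t_wf by (auto simp: vars_subst t_vars intro!: wf_subst)
  then have st: "satisfies (quot A \<theta>) (t,t')" using assms(2) by (auto simp: in_S_def in_Mod_def)
  define g where "g y = (if y = 0 then a else b)" for y :: nat
  have g: "\<forall>y. g y \<in> fst A" using p by (simp add: g_def)
  have "\<forall>y. \<theta> `` {g y} \<in> fst (quot A \<theta>)" using g by (simp add: quot_def quotientI)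
  then have "eval (quot A \<theta>) (\<lambda>y. \<theta> `` {g y}) t = eval (quot A \<theta>) (\<lambda>y. \<theta> `` {g y}) t'"
    using st unfolding satisfies_def by auto
  moreover have "eval (quot A \<theta>) (\<lambda>y. \<theta> `` {g y}) t = \<theta> `` {a}"
    using eval_quot[OF assms(1) alg t_wf g] p by (simp add: tA_def g_def)
  moreover have "wf_trm ar t'" unfolding t'_def using t_wf by (auto intro!: wf_subst)
  moreover have "eval A g t' = b"
  proof -
    have "eval A g t' = eval A (\<lambda>y. if y = 0 then b else a) t"
      unfolding t'_def eval_subst by (rule eval_cong) (auto simp: g_def)
    then show ?thesis using p by (simp add: tA_def)
  qed
  ultimately have "\<theta> `` {a} = \<theta> `` {b}"
    using eval_quot[OF assms(1) alg _ g, of t'] by simp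
  then show "p \<in> \<theta>" using eq_equiv_class_iff[OF eq p(2,3)] p(1) by simp
qed


primrec chain :: "nat \<Rightarrow> nat \<Rightarrow> ('f,nat) trm" where
  "chain y 0 = Var y"
| "chain y (Suc k) = tsub (chain y k) (Var k)"

lemma chain_vars: "vars (chain y k) = insert y {..<k}"
proof (induction k)
  case 0 then show ?case by simp
next
  case (Suc k)
  have "vars (chain y (Suc k)) = insert y {..<k} \<union> {k}" using Suc by (simp add: tsub_vars)
  also have "\<dots> = insert y {..<Suc k}" by (simp only: lessThan_Suc) blast
  finally show ?case .
qed

lemma chain_wf: "wf_trm ar (chain y k)"
  by (induction k) (auto simp: tsub_wf)

lemma chain_eval: "(\<forall>y z. tA (h y) (h z) = h y) \<Longrightarrow> eval A h (chain y k) = h y"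
  by (induction k) (auto simp: tsub_eval)

lemma R_classes:
  assumes c: "c \<in> fst A // R"
  shows "in_Mod ar E (subalg A c)"
proof -
  have eq: "equiv (fst A) R" using R_cong unfolding is_cong_def by blast
  obtain a0 where a0: "a0 \<in> fst A" "c = R `` {a0}" using c by (rule quotientE)
  have inc: "x \<in> c \<longleftrightarrow> (a0,x) \<in> R" for x using a0 by simp
  have a0c: "a0 \<in> c" using inc a0 tA_refl by (simp add: R_def)
  have pair: "(x,y) \<in> R" if "x \<in> c" "y \<in> c" for x y
    using that inc eq by (meson equivE symD transD)
  have cA: "c \<subseteq> fst A" using inc by (auto simp: R_def)
  have "is_alg ar (subalg A c)"
    unfolding is_alg_def subalg_def
  proof (intro allI impI, simp only: fst_conv snd_conv)
    fix f and as :: "'a list"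
    assume h: "length as = ar f \<and> set as \<subseteq> c"
    define k where "k = ar f"
    have k1: "k \<ge> 1" using ar1 k_def by simp
    define rep where "rep = replicate k a0"
    have asc: "as!i \<in> c" if "i < length as" for i using h that nth_mem by blast
    have la: "list_all2 (\<lambda>a b. (a,b) \<in> R) as rep"
      using h asc by (auto simp: list_all2_conv_all_nth rep_def k_def intro!: pair a0c)
    have 1: "(snd A f as, snd A f rep) \<in> R"
      using R_cong la h unfolding is_cong_def by blast
    have repA: "snd A f rep \<in> fst A" by (rule is_algD[OF alg]) (use a0 in \<open>auto simp: rep_def k_def\<close>)
    have v1: "vars (Fun f (replicate k (Var (0::nat)))) = {0}" using k1 by simp
    have w1: "wf_trm ar (Fun f (replicate k (Var (0::nat))))" by (simp add: k_def)
    have e1: "eval A (\<lambda>_. a0) (Fun f (replicate k (Var (0::nat)))) = snd A f rep" by (simp add: rep_def)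
    have "tA (eval A (\<lambda>_. a0) (Fun f (replicate k (Var (0::nat))))) (eval A (\<lambda>_. a0) (Var (0::nat)))
        = eval A (\<lambda>_. a0) (Fun f (replicate k (Var (0::nat))))"
      by (rule absorb[OF w1]) (use v1 a0 in auto)
    then have "tA (snd A f rep) a0 = snd A f rep" using e1 by simp
    moreover have "tA (eval A (\<lambda>_. a0) (Var (0::nat))) (eval A (\<lambda>_. a0) (Fun f (replicate k (Var (0::nat)))))
        = eval A (\<lambda>_. a0) (Var (0::nat))"
      by (rule absorb[OF _ w1]) (use v1 a0 in auto)
    then have "tA a0 (snd A f rep) = a0" using e1 by simp
    ultimately have 2: "(snd A f rep, a0) \<in> R" using repA a0 by (simp add: R_def)
    have "(a0, snd A f as) \<in> R" using 1 2 eq by (meson equivE symD transD)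
    then show "snd A f as \<in> c" using inc by simp
  qed
  moreover have "satisfies (subalg A c) \<sigma>" if \<sigma>: "\<sigma> \<in> E" for \<sigma>
  proof -
    obtain u v where uv: "\<sigma> = (u,v)" by fastforce
    have uvI: "(u,v) \<in> IdV ar E" using \<sigma> uv E_IdV by simp
    show ?thesis unfolding satisfies_def uv fst_conv snd_conv
    proof (intro allI impI)
      fix h :: "nat \<Rightarrow> 'a" assume h: "\<forall>x. h x \<in> fst (subalg A c)"
      then have hc: "\<forall>x. h x \<in> c" by (simp add: subalg_def)
      have hA: "\<forall>x. h x \<in> fst A" using hc cA by blast
      have pw: "\<forall>y z. tA (h y) (h z) = h y" using pair hc by (simp add: R_def)
      define m where "m = Suc (Max (vars u \<union> vars v))"
      have fin: "finite (vars u \<union> vars v)" by (simp add: vars_finite)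
      have ym: "y < m" if "y \<in> vars u \<union> vars v" for y
        using Max_ge[OF fin that] m_def by simp
      have "eval A h (subst (\<lambda>y. chain y m) u) = eval A h (subst (\<lambda>y. chain y m) v)"
      proof (rule identity_gen[OF uvI _ _ _ hA])
        show "{..<m} \<noteq> {}" "finite {..<m}" by (auto simp: m_def)
        show "\<forall>y\<in>vars u \<union> vars v. wf_trm ar (chain y m) \<and> vars (chain y m) = {..<m}"
          using ym by (auto simp: chain_wf chain_vars)
      qed
      moreover have "eval A h (subst (\<lambda>y. chain y m) w) = eval A h w" for w
        unfolding eval_subst by (rule eval_cong) (simp add: chain_eval[OF pw])
      ultimately have "eval A h u = eval A h v" by simp
      then show "eval (subalg A c) h u = eval (subalg A c) h v"
        using eval_snd[of "subalg A c" A h u] eval_snd[of "subalg A c" A h v] by (simp add: subalg_def)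
    qed
  qed
  ultimately show ?thesis by (simp add: in_Mod_def)
qed

end

theorem proposition5p2:
  fixes ar :: "'f \<Rightarrow> nat" and E :: "('f,nat) ident set" and t :: "('f,nat) trm"
    and X :: "'x set" and B :: "(('f,'x) trm set, 'f) alg"
    and \<delta> \<rho> \<psi> :: "(('f,'x) trm set \<times> ('f,'x) trm set) set"
  assumes "plural ar"
    and "\<forall>(u,v)\<in>E. wf_trm ar u \<and> wf_trm ar v"
    and "t \<in> Tm ar 2"
    and "(t, Var 0) \<in> IdV ar E"
    and "B = free_alg ar (prolong ar (IdV ar E)) X"
    and "is_cong ar B \<delta>"
    and "sl_replica ar B \<rho>"
    and "\<psi> = cong_join ar B \<delta> \<rho>"
  shows "in_VS ar E (quot B \<delta>)
    \<and> sl_replica ar (quot B \<delta>) (cong_quot \<psi> \<delta>)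
    \<and> (\<forall>c\<in>fst (quot B \<delta>) // cong_quot \<psi> \<delta>. in_Mod ar E (subalg (quot B \<delta>) c))"
proof -
  note pl = assms(1) and Ewf = assms(2) and tT = assms(3) and tid = assms(4)
  let ?P = "prolong ar (IdV ar E)"
  have Pwf: "\<forall>\<sigma>\<in>?P. wf_trm ar (fst \<sigma>) \<and> wf_trm ar (snd \<sigma>)"
    unfolding prolong_def IdV_def Tm_def by (auto intro!: wf_subst)
  have Balg: "is_alg ar B" using assms(5) free_alg_alg by simp
  have Bsat: "\<forall>\<sigma>\<in>?P. satisfies B \<sigma>"
    using free_sat[OF Pwf] assms(5) by (metis prod.collapse)
  interpret pB: pro ar E t B using pl Ewf tT tid Balg Bsat by unfold_locales
  define Q where "Q = quot B \<delta>"
  have eqd: "equiv (fst B) \<delta>" using assms(6) unfolding is_cong_def by blast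
  have Qalg: "is_alg ar Q" unfolding Q_def by (rule quot_is_alg[OF Balg eqd])
  have Qsat: "\<forall>\<sigma>\<in>?P. satisfies Q \<sigma>"
  proof
    fix \<sigma> assume s: "\<sigma> \<in> ?P"
    then have "satisfies B (fst \<sigma>, snd \<sigma>)" using Bsat by simp
    then have "satisfies Q (fst \<sigma>, snd \<sigma>)"
      unfolding Q_def using quot_sat[OF Balg assms(6)] Pwf s by blast
    then show "satisfies Q \<sigma>" by simp
  qed
  interpret pQ: pro ar E t Q using pl Ewf tT tid Qalg Qsat by unfold_locales
  have fQ: "fst Q = fst B // \<delta>" by (simp add: Q_def quot_def)
  have eqR: "equiv (fst Q) pQ.R" using pQ.R_cong unfolding is_cong_def by blast
  have rho: "\<rho> = pB.R"
  proof
    show "\<rho> \<subseteq> pB.R" using assms(7) pB.R_cong pB.R_S unfolding sl_replica_def by blast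
    show "pB.R \<subseteq> \<rho>" using assms(7) pB.R_min unfolding sl_replica_def by blast
  qed
  have cls: "\<delta> `` {a} \<in> fst Q" if "a \<in> fst B" for a using that fQ by (simp add: quotientI)
  have hom_t: "pQ.tA (\<delta> `` {a}) (\<delta> `` {b}) = \<delta> `` {pB.tA a b}" if "a \<in> fst B" "b \<in> fst B" for a b
  proof -
    have "(\<lambda>y::nat. if y = 0 then \<delta> `` {a} else \<delta> `` {b}) = (\<lambda>y. \<delta> `` {if y = 0 then a else b})"
      by (simp add: fun_eq_iff)
    moreover have "\<forall>y::nat. (if y = 0 then a else b) \<in> fst B" using that by simp
    ultimately show ?thesis
      unfolding pQ.tA_def pB.tA_def using eval_quot[OF assms(6) Balg pB.t_wf] by (simp add: Q_def)
  qed
  define \<psi>' where "\<psi>' = {(a,b). a \<in> fst B \<and> b \<in> fst B \<and> (\<delta> `` {a}, \<delta> `` {b}) \<in> pQ.R}"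
  have \<psi>'cong: "is_cong ar B \<psi>'"
    unfolding is_cong_def
  proof (intro conjI allI impI)
    show "equiv (fst B) \<psi>'"
    proof (rule equivI)
      show "\<psi>' \<subseteq> fst B \<times> fst B" by (auto simp: \<psi>'_def)
      show "refl_on (fst B) \<psi>'" unfolding refl_on_def \<psi>'_def
        using cls eqR by (auto simp: equiv_def refl_on_def)
      show "sym \<psi>'" unfolding sym_def \<psi>'_def using eqR by (auto simp: equiv_def dest: symD)
      show "trans \<psi>'" unfolding trans_def \<psi>'_def using eqR by (auto simp: equiv_def dest: transD)
    qed
  next
    fix f as bs assume l: "length as = ar f" and la: "list_all2 (\<lambda>a b. (a, b) \<in> \<psi>') as bs"
    have lb: "length bs = ar f" using la l by (simp add: list_all2_lengthD)
    have sa: "set as \<subseteq> fst B" "set bs \<subseteq> fst B"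
      using la by (auto simp: list_all2_conv_all_nth set_conv_nth \<psi>'_def)
    have "list_all2 (\<lambda>a b. (a, b) \<in> pQ.R) (map (\<lambda>a. \<delta> `` {a}) as) (map (\<lambda>a. \<delta> `` {a}) bs)"
      using la by (auto simp: list_all2_conv_all_nth \<psi>'_def)
    then have "(snd Q f (map (\<lambda>a. \<delta> `` {a}) as), snd Q f (map (\<lambda>a. \<delta> `` {a}) bs)) \<in> pQ.R"
      using pQ.R_cong l unfolding is_cong_def by simp
    moreover have "snd Q f (map (\<lambda>a. \<delta> `` {a}) as) = \<delta> `` {snd B f as}"
      unfolding Q_def by (rule quot_hom[OF assms(6) l sa(1)])
    moreover have "snd Q f (map (\<lambda>a. \<delta> `` {a}) bs) = \<delta> `` {snd B f bs}"
      unfolding Q_def by (rule quot_hom[OF assms(6) lb sa(2)])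
    moreover have "snd B f as \<in> fst B" "snd B f bs \<in> fst B"
      using is_algD[OF Balg] l lb sa by auto
    ultimately show "(snd B f as, snd B f bs) \<in> \<psi>'" unfolding \<psi>'_def by simp
  qed
  have d\<psi>': "\<delta> \<subseteq> \<psi>'"
  proof
    fix p assume "p \<in> \<delta>"
    then obtain a b where p: "p = (a,b)" "(a,b) \<in> \<delta>" by (cases p) auto
    then have ab: "a \<in> fst B" "b \<in> fst B" using equiv_type[OF eqd] by auto
    have "\<delta> `` {a} = \<delta> `` {b}" using equiv_class_eq[OF eqd p(2)] .
    then show "p \<in> \<psi>'" using p ab cls eqR unfolding \<psi>'_def by (auto simp: equiv_def refl_on_def)
  qed
  have r\<psi>': "\<rho> \<subseteq> \<psi>'"
  proof
    fix p assume "p \<in> \<rho>"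
    then obtain a b where p: "p = (a,b)" "a \<in> fst B" "b \<in> fst B" "pB.tA a b = a" "pB.tA b a = b"
      using rho by (auto simp: pB.R_def)
    then show "p \<in> \<psi>'" unfolding \<psi>'_def pQ.R_def using hom_t cls by auto
  qed
  have \<psi>\<psi>': "\<psi> \<subseteq> \<psi>'"
    unfolding assms(8) cong_join_def using \<psi>'cong d\<psi>' r\<psi>' by blast
  have \<psi>'\<psi>: "\<psi>' \<subseteq> \<psi>"
  proof
    fix p assume "p \<in> \<psi>'"
    then obtain a b where p: "p = (a,b)" "a \<in> fst B" "b \<in> fst B" "(\<delta> `` {a}, \<delta> `` {b}) \<in> pQ.R"
      unfolding \<psi>'_def by blast
    have tab: "pB.tA a b \<in> fst B" "pB.tA b a \<in> fst B" using pB.tA_in p by auto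
    have "\<delta> `` {pB.tA a b} = \<delta> `` {a}" "\<delta> `` {pB.tA b a} = \<delta> `` {b}"
      using p(4) hom_t[OF p(2,3)] hom_t[OF p(3,2)] unfolding pQ.R_def by auto
    then have d1: "(pB.tA a b, a) \<in> \<delta>" and d2: "(pB.tA b a, b) \<in> \<delta>"
      using eq_equiv_class_iff[OF eqd] tab p by auto
    define h where "h y = (if y = 0 then a else b)" for y :: nat
    have h: "\<forall>x. h x \<in> fst B" using p by (simp add: h_def)
    have w: "wf_trm ar (pB.tsub (Var 0) (Var 1))" "wf_trm ar (pB.tsub (Var 1) (Var 0))"
      by (auto intro: pB.tsub_wf)
    have v: "vars (pB.tsub (Var 0) (Var 1)) = vars (pB.tsub (Var 1) (Var 0))"
      by (auto simp: pB.tsub_vars)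
    have e1: "eval B h (pB.tsub (Var 0) (Var 1)) = pB.tA a b"
      and e2: "eval B h (pB.tsub (Var 1) (Var 0)) = pB.tA b a"
      by (simp_all add: pB.tsub_eval h_def)
    have "(pB.tA a b, pB.tA b a) \<in> pB.R"
      using pB.absorb[OF w(1) w(2) v h] pB.absorb[OF w(2) w(1) v[symmetric] h] e1 e2 tab
      by (simp add: pB.R_def)
    then have r: "(pB.tA a b, pB.tA b a) \<in> \<rho>" using rho by simp
    show "p \<in> \<psi>"
      unfolding assms(8) cong_join_def
    proof (rule InterI, clarify)
      fix \<theta> assume th: "is_cong ar B \<theta>" "\<delta> \<union> \<rho> \<subseteq> \<theta>"
      then have eqt: "equiv (fst B) \<theta>" unfolding is_cong_def by blast
      have "(a, pB.tA a b) \<in> \<theta>" using d1 th eqt by (meson UnCI equivE subsetD symD)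
      moreover have "(pB.tA a b, pB.tA b a) \<in> \<theta>" using r th by blast
      moreover have "(pB.tA b a, b) \<in> \<theta>" using d2 th by blast
      ultimately show "p \<in> \<theta>" using p(1) eqt by (meson equivE transD)
    qed
  qed
  have cq: "cong_quot \<psi> \<delta> = pQ.R"
  proof
    show "cong_quot \<psi> \<delta> \<subseteq> pQ.R"
      using \<psi>\<psi>' unfolding cong_quot_def \<psi>'_def by blast
    show "pQ.R \<subseteq> cong_quot \<psi> \<delta>"
    proof
      fix p assume pR: "p \<in> pQ.R"
      then obtain x y where p: "p = (x,y)" "x \<in> fst Q" "y \<in> fst Q" by (auto simp: pQ.R_def)
      obtain a where a: "a \<in> fst B" "x = \<delta> `` {a}" using p(2) fQ by (auto elim: quotientE)
      obtain b where b: "b \<in> fst B" "y = \<delta> `` {b}" using p(3) fQ by (auto elim: quotientE)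
      have "(a,b) \<in> \<psi>" using \<psi>'\<psi> pR p a b unfolding \<psi>'_def by blast
      then show "p \<in> cong_quot \<psi> \<delta>" unfolding cong_quot_def using p a b by blast
    qed
  qed
  have cl: "\<forall>c\<in>fst Q // pQ.R. in_Mod ar E (subalg Q c)" using pQ.R_classes by blast
  have "in_VS ar E Q" unfolding in_VS_def using pQ.R_cong pQ.R_S cl by blast
  moreover have "sl_replica ar Q pQ.R"
    unfolding sl_replica_def using pQ.R_cong pQ.R_S pQ.R_min by blast
  ultimately show ?thesis using cl cq unfolding Q_def by simp
qed

end
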